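(* The map $\iota:S^2_+\to E(S^1)$, $p\mapsto f_p$, where $f_p(x)=d(p,x)$ for $x\in S^1$, is an isometric embedding. Moreover, $\iota(S^2_+)$ is the only subset of $E(S^1)$ that is isometric to $S^2_+$.
   Context: $S^2_+=\{(x,y,z)\in\mathbb{R}^3:x^2+y^2+z^2=1,\ z\ge0\}$ carries its intrinsic (geodesic) metric $d$. $S^1$ is its boundary circle $\{z=0\}$ with the restricted metric, which is the intrinsic metric of the circle of length $2\pi$. $E(S^1)$ is the set of $1$-Lipschitz functions $f:S^1\to\mathbb{R}$ such that $d(x,y)\le f(x)+f(y)$ for all $x,y\in S^1$ and, for each $x$, there is $y$ with $f(x)+f(y)=d(x,y)$. It is equipped with the sup norm $\|\cdot\|_\infty$. *)

theory Defs
  imports "HOL-Analysis.Analysis"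
begin

text \<open>Points of R^3 are vectors of type real^3; coordinates x, y, z are components 1, 2, 3.\<close>

definition S2p :: "(real^3) set" where
  "S2p = {p. norm p = 1 \<and> p $ 3 \<ge> 0}"

definition S1 :: "(real^3) set" where
  "S1 = {p. norm p = 1 \<and> p $ 3 = 0}"

text \<open>Intrinsic (great-circle) distance on the unit sphere; restricted to the closed
  upper hemisphere it is the intrinsic metric of the hemisphere, and restricted to the
  equator it is the intrinsic metric of the circle of length 2 pi.\<close>
definition gdist :: "real^3 \<Rightarrow> real^3 \<Rightarrow> real" where
  "gdist p q = arccos (p \<bullet> q)"

text \<open>Real functions on S1, represented extensionally (value 0 off S1).\<close>
definition E_S1 :: "(real^3 \<Rightarrow> real) set" where
  "E_S1 = {f. (\<forall>x. x \<notin> S1 \<longrightarrow> f x = 0)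
             \<and> (\<forall>x\<in>S1. \<forall>y\<in>S1. \<bar>f x - f y\<bar> \<le> gdist x y)
             \<and> (\<forall>x\<in>S1. \<forall>y\<in>S1. gdist x y \<le> f x + f y)
             \<and> (\<forall>x\<in>S1. \<exists>y\<in>S1. f x + f y = gdist x y)}"

definition supdist :: "(real^3 \<Rightarrow> real) \<Rightarrow> (real^3 \<Rightarrow> real) \<Rightarrow> real" where
  "supdist f g = (SUP x\<in>S1. \<bar>f x - g x\<bar>)"

definition iota :: "real^3 \<Rightarrow> (real^3 \<Rightarrow> real)" where
  "iota p = (\<lambda>x. if x \<in> S1 then gdist p x else 0)"

end

theory Submission
  imports Defs
begin

lemma unit_inner_bounds:
  fixes p q :: "real^3"
  assumes "norm p = 1" "norm q = 1"
  shows "-1 \<le> p \<bullet> q" "p \<bullet> q \<le> 1"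
proof -
  have "\<bar>p \<bullet> q\<bar> \<le> 1" using Cauchy_Schwarz_ineq2[of p q] assms by simp
  then show "-1 \<le> p \<bullet> q" "p \<bullet> q \<le> 1" by auto
qed

lemma self_arccos:
  fixes p :: "real^3" assumes "norm p = 1" shows "arccos (p \<bullet> p) = 0"
  using assms by (simp add: norm_eq_1)

lemma sph_triangle:
  fixes p q r :: "real^3"
  assumes np: "norm p = 1" and nq: "norm q = 1" and nr: "norm r = 1"
  shows "arccos (p \<bullet> r) \<le> arccos (p \<bullet> q) + arccos (q \<bullet> r)"
proof -
  define s where "s = p \<bullet> q"
  define t where "t = q \<bullet> r"
  define a where "a = arccos s"
  define b where "b = arccos t"
  have sb: "-1 \<le> s" "s \<le> 1" using unit_inner_bounds[OF np nq] s_def by auto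
  have tb: "-1 \<le> t" "t \<le> 1" using unit_inner_bounds[OF nq nr] t_def by auto
  have rb: "-1 \<le> p \<bullet> r" "p \<bullet> r \<le> 1" using unit_inner_bounds[OF np nr] by auto
  have ab: "0 \<le> a" "a \<le> pi" using arccos_bounded[OF sb] a_def by auto
  have bb: "0 \<le> b" "b \<le> pi" using arccos_bounded[OF tb] b_def by auto
  show ?thesis
  proof (cases "a + b \<le> pi")
    case False
    then show ?thesis using arccos_ubound[OF rb] a_def b_def s_def t_def by simp
  next
    case True
    define p' where "p' = p - s *\<^sub>R q"
    define r' where "r' = r - t *\<^sub>R q"
    have qq: "q \<bullet> q = 1" using nq by (simp add: norm_eq_1)
    have pp: "p \<bullet> p = 1" using np by (simp add: norm_eq_1)
    have rr: "r \<bullet> r = 1" using nr by (simp add: norm_eq_1)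
    have e1: "p' \<bullet> r' = p \<bullet> r - s * t"
      unfolding p'_def r'_def using qq s_def t_def
      by (simp add: inner_diff_left inner_diff_right inner_commute)
    have e2: "norm p' ^ 2 = 1 - s^2"
      unfolding p'_def power2_norm_eq_inner using qq pp s_def
      by (simp add: inner_diff_left inner_diff_right inner_commute power2_eq_square)
    have e3: "norm r' ^ 2 = 1 - t^2"
      unfolding r'_def power2_norm_eq_inner using qq rr t_def
      by (simp add: inner_diff_left inner_diff_right inner_commute power2_eq_square)
    have "norm p' = sqrt (1 - s^2)" using e2 by (metis norm_ge_zero real_sqrt_unique)
    moreover have "norm r' = sqrt (1 - t^2)" using e3 by (metis norm_ge_zero real_sqrt_unique)
    ultimately have cs: "\<bar>p \<bullet> r - s * t\<bar> \<le> sqrt (1 - s^2) * sqrt (1 - t^2)"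
      using Cauchy_Schwarz_ineq2[of p' r'] e1 by simp
    have "cos (a + b) = s * t - sqrt (1 - s^2) * sqrt (1 - t^2)"
      unfolding cos_add a_def b_def using sb tb by (simp add: cos_arccos sin_arccos)
    then have "cos (a + b) \<le> p \<bullet> r" using cs by linarith
    then have "arccos (p \<bullet> r) \<le> arccos (cos (a + b))"
      using arccos_le_arccos[of "cos (a+b)" "p \<bullet> r"] rb by simp
    also have "\<dots> = a + b" using arccos_cos ab bb True by simp
    finally show ?thesis using a_def b_def s_def t_def by simp
  qed
qed

lemma sph_between:
  fixes p q x :: "real^3"
  assumes np: "norm p = 1" and nq: "norm q = 1" and nx: "norm x = 1"
    and qd: "q = \<alpha> *\<^sub>R x + \<beta> *\<^sub>R p" and al: "\<alpha> \<ge> 0" and be: "\<beta> \<ge> 0"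
  shows "arccos (p \<bullet> x) = arccos (p \<bullet> q) + arccos (q \<bullet> x)"
proof -
  define c where "c = p \<bullet> x"
  have qq: "q \<bullet> q = 1" using nq by (simp add: norm_eq_1)
  have pp: "p \<bullet> p = 1" using np by (simp add: norm_eq_1)
  have xx: "x \<bullet> x = 1" using nx by (simp add: norm_eq_1)
  have cb: "-1 \<le> c" "c \<le> 1" using unit_inner_bounds[OF np nx] c_def by auto
  have pqb: "-1 \<le> p \<bullet> q" "p \<bullet> q \<le> 1" using unit_inner_bounds[OF np nq] by auto
  have qxb: "-1 \<le> q \<bullet> x" "q \<bullet> x \<le> 1" using unit_inner_bounds[OF nq nx] by auto
  have pq: "p \<bullet> q = \<alpha> * c + \<beta>" unfolding qd c_def using pp
    by (simp add: inner_add_right inner_commute)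
  have qx: "q \<bullet> x = \<alpha> + \<beta> * c" unfolding qd c_def using xx
    by (simp add: inner_add_left inner_add_right inner_commute)
  have one: "1 = \<alpha>^2 + \<beta>^2 + 2*\<alpha>*\<beta>*c"
    using qq unfolding qd c_def using pp xx
    by (simp add: inner_add_left inner_add_right inner_commute power2_eq_square algebra_simps)
  have s1: "1 - (\<alpha> * c + \<beta>)^2 = \<alpha>^2 * (1 - c^2)" using one by (simp add: power2_eq_square algebra_simps)
  have s2: "1 - (\<alpha> + \<beta> * c)^2 = \<beta>^2 * (1 - c^2)" using one by (simp add: power2_eq_square algebra_simps)
  have c2: "0 \<le> 1 - c^2"
  proof -
    have "0 \<le> (1 - c) * (1 + c)" using cb by (intro mult_nonneg_nonneg) auto
    then show ?thesis by (simp add: power2_eq_square algebra_simps)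
  qed
  have sq1: "sqrt (1 - (p \<bullet> q)^2) = \<alpha> * sqrt (1 - c^2)"
    unfolding pq s1 using al by (simp add: real_sqrt_mult)
  have sq2: "sqrt (1 - (q \<bullet> x)^2) = \<beta> * sqrt (1 - c^2)"
    unfolding qx s2 using be by (simp add: real_sqrt_mult)
  define a where "a = arccos (p \<bullet> q)"
  define b where "b = arccos (q \<bullet> x)"
  have ab: "0 \<le> a" "a \<le> pi" using arccos_bounded[OF pqb] a_def by auto
  have bb: "0 \<le> b" "b \<le> pi" using arccos_bounded[OF qxb] b_def by auto
  have "cos (a + b) = (\<alpha> * c + \<beta>) * (\<alpha> + \<beta> * c) - \<alpha> * \<beta> * (sqrt (1 - c^2))^2"
  proof -
    have "cos a = \<alpha> * c + \<beta>" using pqb pq a_def by (simp add: cos_arccos)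
    moreover have "cos b = \<alpha> + \<beta> * c" using qxb qx b_def by (simp add: cos_arccos)
    moreover have "sin a = \<alpha> * sqrt (1 - c^2)" using pqb sq1 a_def by (simp add: sin_arccos)
    moreover have "sin b = \<beta> * sqrt (1 - c^2)" using qxb sq2 b_def by (simp add: sin_arccos)
    ultimately show ?thesis unfolding cos_add by (simp add: power2_eq_square algebra_simps)
  qed
  also have "\<dots> = c * (\<alpha>^2 + \<beta>^2 + 2*\<alpha>*\<beta>*c)" using c2 by (simp add: power2_eq_square algebra_simps)
  also have "\<dots> = c" using one by simp
  finally have cab: "cos (a + b) = c" .
  have "- (q \<bullet> x) \<le> p \<bullet> q"
  proof -
    have "0 \<le> (\<alpha> + \<beta>) * (1 + c)" using al be cb by (intro mult_nonneg_nonneg) auto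
    then show ?thesis unfolding pq qx by (simp add: algebra_simps)
  qed
  then have "a \<le> arccos (- (q \<bullet> x))" unfolding a_def
    using arccos_le_arccos[of "- (q \<bullet> x)" "p \<bullet> q"] pqb qxb by simp
  also have "\<dots> = pi - b" using arccos_minus qxb b_def by simp
  finally have "a + b \<le> pi" by simp
  then have "arccos c = a + b" using cab arccos_cos[of "a+b"] ab bb by simp
  then show ?thesis using a_def b_def c_def by simp
qed

lemma S1_S2p: "x \<in> S1 \<Longrightarrow> x \<in> S2p"
  unfolding S1_def S2p_def by auto

lemma S2p_norm: "x \<in> S2p \<Longrightarrow> norm x = 1"
  unfolding S2p_def by auto

lemma S1_norm: "x \<in> S1 \<Longrightarrow> norm x = 1"
  unfolding S1_def by auto

lemma gdist_sym: "gdist p q = gdist q p"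
  unfolding gdist_def by (simp add: inner_commute)

lemma gdist_self: "norm p = 1 \<Longrightarrow> gdist p p = 0"
  unfolding gdist_def by (simp add: norm_eq_1)

lemma gdist_bounds: "norm p = 1 \<Longrightarrow> norm q = 1 \<Longrightarrow> 0 \<le> gdist p q \<and> gdist p q \<le> pi"
  unfolding gdist_def using arccos_bounded unit_inner_bounds by blast

lemma gdist_tri: "norm p = 1 \<Longrightarrow> norm q = 1 \<Longrightarrow> norm r = 1 \<Longrightarrow> gdist p r \<le> gdist p q + gdist q r"
  unfolding gdist_def by (rule sph_triangle)

lemma S1_neg: "x \<in> S1 \<Longrightarrow> -x \<in> S1"
  unfolding S1_def by auto

lemma gdist_neg: "norm x = 1 \<Longrightarrow> norm p = 1 \<Longrightarrow> gdist p (-x) = pi - gdist p x"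
  unfolding gdist_def using unit_inner_bounds[of p x] by (simp add: arccos_minus)

lemma S1_nonempty: "vector [1,0,0] \<in> S1"
  unfolding S1_def by (simp add: norm_eq_1 inner_vec_def sum_3)

lemma part1: "p \<in> S2p \<Longrightarrow> iota p \<in> E_S1"
proof -
  assume p: "p \<in> S2p"
  have np: "norm p = 1" using p S2p_norm by auto
  show ?thesis unfolding E_S1_def iota_def
  proof (intro CollectI conjI ballI allI impI)
    fix x y assume x: "x \<in> S1" and y: "y \<in> S1"
    have nx: "norm x = 1" "norm y = 1" using x y S1_norm by auto
    have "gdist p x \<le> gdist p y + gdist y x" "gdist p y \<le> gdist p x + gdist x y"
      using gdist_tri np nx by auto
    then show "\<bar>(if x \<in> S1 then gdist p x else 0) - (if y \<in> S1 then gdist p y else 0)\<bar> \<le> gdist x y"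
      using x y gdist_sym[of x y] by auto
    have "gdist x y \<le> gdist x p + gdist p y" using gdist_tri np nx by auto
    then show "gdist x y \<le> (if x \<in> S1 then gdist p x else 0) + (if y \<in> S1 then gdist p y else 0)"
      using x y gdist_sym[of x p] by auto
  next
    fix x assume x: "x \<in> S1"
    have nx: "norm x = 1" using x S1_norm by auto
    show "\<exists>y\<in>S1. (if x \<in> S1 then gdist p x else 0) + (if y \<in> S1 then gdist p y else 0) = gdist x y"
    proof (intro bexI[of _ "-x"])
      show "-x \<in> S1" using x S1_neg by auto
      have "gdist x (-x) = pi" using gdist_neg[OF nx nx] gdist_self[OF nx] by simp
      then show "(if x \<in> S1 then gdist p x else 0) + (if -x \<in> S1 then gdist p (-x) else 0) = gdist x (-x)"
        using x S1_neg[OF x] gdist_neg[OF nx np] by simp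
    qed
  qed auto
qed

lemma part2_witness:
  assumes p: "p \<in> S2p" and q: "q \<in> S2p"
  shows "\<exists>x\<in>S1. \<bar>gdist p x - gdist q x\<bar> = gdist p q"
proof -
  have np: "norm p = 1" and nq: "norm q = 1" using p q S2p_norm by auto
  show ?thesis
  proof (cases "p $ 3 = 0")
    case True
    then have "p \<in> S1" using np unfolding S1_def by auto
    then show ?thesis using gdist_self[OF np] gdist_sym[of p q] gdist_bounds[OF nq np] by (intro bexI[of _ p]) auto
  next
    case p3: False
    show ?thesis
    proof (cases "q $ 3 = 0")
      case True
      then have "q \<in> S1" using nq unfolding S1_def by auto
      then show ?thesis using gdist_self[OF nq] gdist_bounds[OF np nq] by (intro bexI[of _ q]) auto
    next
      case q3: False
      have p3p: "p $ 3 > 0" using p p3 unfolding S2p_def by auto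
      have q3p: "q $ 3 > 0" using q q3 unfolding S2p_def by auto
      show ?thesis
      proof (cases "p = q")
        case True
        then show ?thesis using S1_nonempty gdist_self[OF np] by auto
      next
        case pq: False
        define w where "w = p $ 3 *\<^sub>R q - q $ 3 *\<^sub>R p"
        have w0: "w \<noteq> 0"
        proof
          assume "w = 0"
          then have e: "p $ 3 *\<^sub>R q = q $ 3 *\<^sub>R p" unfolding w_def by simp
          then have "norm (p $ 3 *\<^sub>R q) = norm (q $ 3 *\<^sub>R p)" by simp
          then have "p $ 3 = q $ 3" using np nq p3p q3p by simp
          then show False using e pq p3p by simp
        qed
        define N where "N = norm w"
        have Np: "N > 0" using w0 N_def by simp
        define x where "x = (1 / N) *\<^sub>R w"
        have nx: "norm x = 1" unfolding x_def N_def using w0 by simp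
        have x3: "x $ 3 = 0" unfolding x_def w_def by (simp add: algebra_simps)
        have xS: "x \<in> S1" using nx x3 unfolding S1_def by simp
        have qd: "q = (N / p $ 3) *\<^sub>R x + (q $ 3 / p $ 3) *\<^sub>R p"
          unfolding x_def w_def using Np p3p
          by (simp add: algebra_simps scaleR_diff_right divide_simps)
        have "arccos (p \<bullet> x) = arccos (p \<bullet> q) + arccos (q \<bullet> x)"
          by (rule sph_between[OF np nq nx qd]) (use Np p3p q3p in auto)
        then have "\<bar>gdist p x - gdist q x\<bar> = gdist p q"
          unfolding gdist_def using arccos_bounded[OF unit_inner_bounds[OF np nq]] by simp
        then show ?thesis using xS by auto
      qed
    qed
  qed
qed

lemma part2:
  assumes p: "p \<in> S2p" and q: "q \<in> S2p"
  shows "supdist (iota p) (iota q) = gdist p q"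
proof -
  have np: "norm p = 1" and nq: "norm q = 1" using p q S2p_norm by auto
  have b: "\<And>x. x \<in> S1 \<Longrightarrow> \<bar>iota p x - iota q x\<bar> \<le> gdist p q"
  proof -
    fix x assume x: "x \<in> S1"
    have nx: "norm x = 1" using x S1_norm by auto
    have "gdist p x \<le> gdist p q + gdist q x" "gdist q x \<le> gdist q p + gdist p x"
      using gdist_tri np nq nx by auto
    then show "\<bar>iota p x - iota q x\<bar> \<le> gdist p q" using x gdist_sym[of p q] unfolding iota_def by auto
  qed
  obtain x where x: "x \<in> S1" and xe: "\<bar>gdist p x - gdist q x\<bar> = gdist p q"
    using part2_witness[OF p q] by auto
  have bdd: "bdd_above ((\<lambda>x. \<bar>iota p x - iota q x\<bar>) ` S1)" using b by (intro bdd_aboveI2) auto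
  have "gdist p q \<le> supdist (iota p) (iota q)" unfolding supdist_def
    using cSUP_upper[OF x bdd] xe x unfolding iota_def by simp
  moreover have "supdist (iota p) (iota q) \<le> gdist p q" unfolding supdist_def
    using S1_nonempty b by (intro cSUP_least) auto
  ultimately show ?thesis by simp
qed

lemma E_nonneg: "f \<in> E_S1 \<Longrightarrow> x \<in> S1 \<Longrightarrow> 0 \<le> f x"
  unfolding E_S1_def using gdist_self[OF S1_norm] by force

lemma E_le_pi: "f \<in> E_S1 \<Longrightarrow> x \<in> S1 \<Longrightarrow> f x \<le> pi"
proof -
  assume f: "f \<in> E_S1" and x: "x \<in> S1"
  then obtain y where y: "y \<in> S1" "f x + f y = gdist x y" unfolding E_S1_def by blast
  then show ?thesis using gdist_bounds[OF S1_norm[OF x] S1_norm[OF y(1)]] E_nonneg[OF f y(1)] by linarith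
qed

lemma E_zero: "f \<in> E_S1 \<Longrightarrow> y \<in> S1 \<Longrightarrow> f y = 0 \<Longrightarrow> f = iota y"
proof
  fix z assume f: "f \<in> E_S1" and y: "y \<in> S1" and fy: "f y = 0"
  show "f z = iota y z"
  proof (cases "z \<in> S1")
    case True
    have "\<bar>f z - f y\<bar> \<le> gdist z y" "gdist y z \<le> f y + f z" using f y True unfolding E_S1_def by blast+
    then show ?thesis using fy True gdist_sym[of z y] unfolding iota_def by auto
  next
    case False
    then show ?thesis using f unfolding E_S1_def iota_def by auto
  qed
qed

lemma E_pi: "f \<in> E_S1 \<Longrightarrow> y \<in> S1 \<Longrightarrow> f y = pi \<Longrightarrow> \<exists>z\<in>S1. f = iota z"
proof -
  assume f: "f \<in> E_S1" and y: "y \<in> S1" and fy: "f y = pi"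
  then obtain z where z: "z \<in> S1" "f y + f z = gdist y z" unfolding E_S1_def by blast
  then have "f z = 0" using gdist_bounds[OF S1_norm[OF y] S1_norm[OF z(1)]] E_nonneg[OF f z(1)] fy by linarith
  then show ?thesis using E_zero[OF f z(1)] z by auto
qed

lemma E_dist_iota: "f \<in> E_S1 \<Longrightarrow> z \<in> S1 \<Longrightarrow> supdist f (iota z) = f z"
proof -
  assume f: "f \<in> E_S1" and z: "z \<in> S1"
  have b: "\<And>y. y \<in> S1 \<Longrightarrow> \<bar>f y - iota z y\<bar> \<le> f z"
  proof -
    fix y assume y: "y \<in> S1"
    have "\<bar>f y - f z\<bar> \<le> gdist y z" "gdist z y \<le> f z + f y" using f y z unfolding E_S1_def by blast+
    then show "\<bar>f y - iota z y\<bar> \<le> f z" using y gdist_sym[of y z] unfolding iota_def by auto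
  qed
  have bdd: "bdd_above ((\<lambda>y. \<bar>f y - iota z y\<bar>) ` S1)" using b by (intro bdd_aboveI2) auto
  have "f z \<le> supdist f (iota z)" unfolding supdist_def
    using cSUP_upper[OF z bdd] z gdist_self[OF S1_norm[OF z]] E_nonneg[OF f z] unfolding iota_def by simp
  moreover have "supdist f (iota z) \<le> f z" unfolding supdist_def
    using S1_nonempty b by (intro cSUP_least) auto
  ultimately show ?thesis by simp
qed

lemma S1_compact: "compact S1"
proof -
  have e: "S1 = sphere 0 1 \<inter> {x::real^3. x $ 3 = 0}" unfolding S1_def by auto
  have "closed {x::real^3. x $ 3 = 0}"
    by (intro closed_Collect_eq continuous_intros)
  then show ?thesis unfolding e by (intro compact_Int_closed compact_sphere)
qed

lemma E_cont: "f \<in> E_S1 \<Longrightarrow> continuous_on S1 f"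
  unfolding continuous_on_def
proof
  fix y assume f: "f \<in> E_S1" and y: "y \<in> S1"
  have c: "continuous_on S1 (\<lambda>x. arccos (x \<bullet> y))"
    using unit_inner_bounds[OF S1_norm S1_norm[OF y]]
    by (intro continuous_on_arccos continuous_intros) auto
  then have "((\<lambda>x. arccos (x \<bullet> y)) \<longlongrightarrow> arccos (y \<bullet> y)) (at y within S1)"
    using y unfolding continuous_on_def by blast
  then have t: "((\<lambda>x. arccos (x \<bullet> y)) \<longlongrightarrow> 0) (at y within S1)"
    using S1_norm[OF y] by (simp add: norm_eq_1)
  show "(f \<longlongrightarrow> f y) (at y within S1)"
  proof (rule metric_tendsto_imp_tendsto[OF t])
    show "\<forall>\<^sub>F x in at y within S1. dist (f x) (f y) \<le> dist (arccos (x \<bullet> y)) 0"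
      unfolding eventually_at_filter
    proof (intro always_eventually allI impI)
      fix x assume "x \<noteq> y" "x \<in> S1"
      then have "\<bar>f x - f y\<bar> \<le> gdist x y" using f y unfolding E_S1_def by blast
      moreover have "0 \<le> gdist x y" using gdist_bounds S1_norm \<open>x \<in> S1\<close> y by blast
      ultimately show "dist (f x) (f y) \<le> dist (arccos (x \<bullet> y)) 0"
        unfolding gdist_def dist_real_def by simp
    qed
  qed
qed

lemma E_attain:
  assumes f: "f \<in> E_S1" and g: "g \<in> E_S1"
  shows "\<exists>y\<in>S1. supdist f g = \<bar>f y - g y\<bar>"
proof -
  have "continuous_on S1 (\<lambda>y. \<bar>f y - g y\<bar>)"
    using E_cont[OF f] E_cont[OF g] by (intro continuous_intros)
  then obtain y where y: "y \<in> S1" and m: "\<forall>z\<in>S1. \<bar>f z - g z\<bar> \<le> \<bar>f y - g y\<bar>"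
    using continuous_attains_sup[OF S1_compact] S1_nonempty by blast
  have bdd: "bdd_above ((\<lambda>y. \<bar>f y - g y\<bar>) ` S1)" using m by (intro bdd_aboveI2) auto
  have "\<bar>f y - g y\<bar> \<le> supdist f g" unfolding supdist_def using cSUP_upper[OF y bdd] .
  moreover have "supdist f g \<le> \<bar>f y - g y\<bar>" unfolding supdist_def
    using S1_nonempty m by (intro cSUP_least) auto
  ultimately show ?thesis using y by (intro bexI[of _ y]) auto
qed

lemma inner3: "(x::real^3) \<bullet> y = x$1*y$1 + x$2*y$2 + x$3*y$3"
  by (simp add: inner_vec_def sum_3)

lemma rows_orth:
  fixes u1 u2 v1 v2 :: real
  assumes "u1^2 + u2^2 = 1" "v1^2 + v2^2 = 1" "u1* v1 + u2* v2 = 0"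
  shows "u1^2 + v1^2 = 1 \<and> u2^2 + v2^2 = 1 \<and> u1* u2 + v1* v2 = 0"
proof -
  define D where "D = u1* v2 - u2* v1"
  have "D^2 = (u1^2 + u2^2)*(v1^2 + v2^2) - (u1* v1 + u2* v2)^2"
    unfolding D_def by (simp add: power2_eq_square algebra_simps)
  then have D2: "D^2 = 1" using assms by simp
  have "v1 = (u1^2+u2^2) * v1" using assms by simp
  also have "\<dots> = u1 * (u1* v1 + u2* v2) - u2 * D" unfolding D_def by (simp add: power2_eq_square algebra_simps)
  finally have v1: "v1 = - D * u2" using assms by simp
  have "v2 = (u1^2+u2^2) * v2" using assms by simp
  also have "\<dots> = u2 * (u1* v1 + u2* v2) + u1 * D" unfolding D_def by (simp add: power2_eq_square algebra_simps)
  finally have v2: "v2 = D * u1" using assms by simp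
  have a: "u1^2 + v1^2 = u1^2 + D^2 * u2^2" unfolding v1 by (simp add: power2_eq_square algebra_simps)
  have b: "u2^2 + v2^2 = u2^2 + D^2 * u1^2" unfolding v2 by (simp add: power2_eq_square algebra_simps)
  have c: "u1* u2 + v1* v2 = u1* u2 * (1 - D^2)" unfolding v1 v2 by (simp add: power2_eq_square algebra_simps)
  show ?thesis using a b c D2 assms by (simp add: algebra_simps)
qed

lemma planar:
  fixes u v y :: "real^3"
  assumes u3: "u$3 = 0" and v3: "v$3 = 0" and uu: "u \<bullet> u = 1" and vv: "v \<bullet> v = 1" and uv: "u \<bullet> v = 0"
  shows "y = (y \<bullet> u) *\<^sub>R u + (y \<bullet> v) *\<^sub>R v + (y$3) *\<^sub>R vector [0,0,1]"
    and "y \<bullet> y = (y \<bullet> u)^2 + (y \<bullet> v)^2 + (y$3)^2"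
proof -
  have r: "(u$1)^2 + (v$1)^2 = 1 \<and> (u$2)^2 + (v$2)^2 = 1 \<and> u$1* u$2 + v$1* v$2 = 0"
    using rows_orth[of "u$1" "u$2" "v$1" "v$2"] uu vv uv u3 v3
    by (simp add: inner3 power2_eq_square)
  have A: "(y$1* u$1 + y$2* u$2) * u$1 + (y$1* v$1 + y$2* v$2) * v$1 = y$1 * ((u$1)^2 + (v$1)^2) + y$2 * (u$1* u$2 + v$1* v$2)"
    by (simp add: power2_eq_square algebra_simps)
  have B: "(y$1* u$1 + y$2* u$2) * u$2 + (y$1* v$1 + y$2* v$2) * v$2 = y$2 * ((u$2)^2 + (v$2)^2) + y$1 * (u$1* u$2 + v$1* v$2)"
    by (simp add: power2_eq_square algebra_simps)
  show e: "y = (y \<bullet> u) *\<^sub>R u + (y \<bullet> v) *\<^sub>R v + (y$3) *\<^sub>R vector [0,0,1]"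
    unfolding vec_eq_iff forall_3 using A B r u3 v3 by (simp add: inner3)
  have C: "(y$1* u$1 + y$2* u$2)^2 + (y$1* v$1 + y$2* v$2)^2 = (y$1)^2 * ((u$1)^2 + (v$1)^2) + (y$2)^2 * ((u$2)^2 + (v$2)^2) + 2*y$1*y$2*(u$1* u$2 + v$1* v$2)"
    by (simp add: power2_eq_square algebra_simps)
  show "y \<bullet> y = (y \<bullet> u)^2 + (y \<bullet> v)^2 + (y$3)^2"
    using C r u3 v3 by (simp add: inner3 power2_eq_square)
qed

lemma part3:
  assumes AE: "A \<subseteq> E_S1" and hb: "bij_betw h S2p A"
    and iso: "\<forall>p\<in>S2p. \<forall>q\<in>S2p. supdist (h p) (h q) = gdist p q"
  shows "A = iota ` S2p"
proof -
  have hE: "\<And>p. p \<in> S2p \<Longrightarrow> h p \<in> E_S1" using hb AE bij_betw_apply[OF hb] by (meson subsetD)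
  have sig: "\<forall>x\<in>S1. \<exists>z. z \<in> S1 \<and> h x = iota z"
  proof
    fix x assume x: "x \<in> S1"
    have nx: "norm x = 1" using x S1_norm by auto
    have "supdist (h x) (h (-x)) = gdist x (-x)" using iso x S1_neg[OF x] S1_S2p by blast
    also have "\<dots> = pi" using gdist_neg[OF nx nx] gdist_self[OF nx] by simp
    finally have sp: "supdist (h x) (h (-x)) = pi" .
    have f: "h x \<in> E_S1" and g: "h (-x) \<in> E_S1" using hE x S1_neg[OF x] S1_S2p by auto
    obtain y where y: "y \<in> S1" and ye: "supdist (h x) (h (-x)) = \<bar>h x y - h (-x) y\<bar>"
      using E_attain[OF f g] by blast
    have "h x y = 0 \<or> h x y = pi"
      using ye sp E_nonneg[OF f y] E_nonneg[OF g y] E_le_pi[OF f y] E_le_pi[OF g y] by linarith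
    then show "\<exists>z. z \<in> S1 \<and> h x = iota z"
      using E_zero[OF f y] E_pi[OF f y] y by blast
  qed
  obtain \<sigma> where \<sigma>0: "\<forall>x\<in>S1. \<sigma> x \<in> S1 \<and> h x = iota (\<sigma> x)"
    using bchoice[OF sig] by blast
  have \<sigma>: "\<sigma> x \<in> S1" "h x = iota (\<sigma> x)" if "x \<in> S1" for x using \<sigma>0 that by auto
  have pres: "\<And>x y. x \<in> S1 \<Longrightarrow> y \<in> S1 \<Longrightarrow> \<sigma> x \<bullet> \<sigma> y = x \<bullet> y"
  proof -
    fix x y assume x: "x \<in> S1" and y: "y \<in> S1"
    have "gdist (\<sigma> x) (\<sigma> y) = supdist (iota (\<sigma> x)) (iota (\<sigma> y))"
      using part2[OF S1_S2p[OF \<sigma>(1)[OF x]] S1_S2p[OF \<sigma>(1)[OF y]]] by simp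
    also have "\<dots> = supdist (h x) (h y)" using \<sigma>(2)[OF x] \<sigma>(2)[OF y] by simp
    also have "\<dots> = gdist x y" using iso x y S1_S2p by blast
    finally have "arccos (\<sigma> x \<bullet> \<sigma> y) = arccos (x \<bullet> y)" unfolding gdist_def .
    moreover have "\<bar>\<sigma> x \<bullet> \<sigma> y\<bar> \<le> 1"
      using unit_inner_bounds[OF S1_norm[OF \<sigma>(1)[OF x]] S1_norm[OF \<sigma>(1)[OF y]]] by simp
    moreover have "\<bar>x \<bullet> y\<bar> \<le> 1"
      using unit_inner_bounds[OF S1_norm[OF x] S1_norm[OF y]] by simp
    ultimately show "\<sigma> x \<bullet> \<sigma> y = x \<bullet> y" using arccos_eq_iff by blast
  qed
  have hp: "\<And>p x. p \<in> S2p \<Longrightarrow> x \<in> S1 \<Longrightarrow> h p (\<sigma> x) = gdist p x"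
  proof -
    fix p x assume p: "p \<in> S2p" and x: "x \<in> S1"
    have "h p (\<sigma> x) = supdist (h p) (iota (\<sigma> x))" using E_dist_iota[OF hE[OF p] \<sigma>(1)[OF x]] by simp
    also have "\<dots> = supdist (h p) (h x)" using \<sigma>(2)[OF x] by simp
    also have "\<dots> = gdist p x" using iso p x S1_S2p by blast
    finally show "h p (\<sigma> x) = gdist p x" .
  qed
  define e1 :: "real^3" where "e1 = vector [1,0,0]"
  define e2 :: "real^3" where "e2 = vector [0,1,0]"
  define e3 :: "real^3" where "e3 = vector [0,0,1]"
  have e1S: "e1 \<in> S1" and e2S: "e2 \<in> S1" unfolding e1_def e2_def S1_def
    by (simp_all add: norm_eq_1 inner3)
  define u where "u = \<sigma> e1"
  define v where "v = \<sigma> e2"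
  have uS: "u \<in> S1" and vS: "v \<in> S1" using \<sigma> e1S e2S u_def v_def by auto
  have u3: "u$3 = 0" and v3: "v$3 = 0" using uS vS unfolding S1_def by auto
  have uu: "u \<bullet> u = 1" using uS S1_norm by (simp add: norm_eq_1)
  have vv: "v \<bullet> v = 1" using vS S1_norm by (simp add: norm_eq_1)
  have uv: "u \<bullet> v = 0" using pres[OF e1S e2S] u_def v_def by (simp add: e1_def e2_def inner3)
  note P = planar[OF u3 v3 uu vv uv]
  define L where "L p = p$1 *\<^sub>R u + p$2 *\<^sub>R v + p$3 *\<^sub>R e3" for p :: "real^3"
  have L3: "\<And>p. (L p)$3 = p$3" unfolding L_def e3_def using u3 v3 by simp
  have Ly: "\<And>p y. y$3 = 0 \<Longrightarrow> L p \<bullet> y = p$1 * (y \<bullet> u) + p$2 * (y \<bullet> v)"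
    unfolding L_def e3_def by (simp add: inner_add_left inner_commute inner3 algebra_simps)
  have LL: "\<And>p. L p \<bullet> L p = p \<bullet> p"
  proof -
    fix p :: "real^3"
    have ue: "u \<bullet> e3 = 0" "v \<bullet> e3 = 0" "e3 \<bullet> e3 = 1" using u3 v3 unfolding e3_def by (simp_all add: inner3)
    have "L p \<bullet> L p = p$1 * p$1 * (u \<bullet> u) + p$2 * p$2 * (v \<bullet> v) + p$3 * p$3 * (e3 \<bullet> e3)
       + 2 * p$1 * p$2 * (u \<bullet> v) + 2 * p$1 * p$3 * (u \<bullet> e3) + 2 * p$2 * p$3 * (v \<bullet> e3)"
      unfolding L_def by (simp add: inner_add_left inner_add_right inner_commute algebra_simps)
    then show "L p \<bullet> L p = p \<bullet> p" using uu vv uv ue by (simp add: inner3)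
  qed
  have LS: "\<And>p. p \<in> S2p \<Longrightarrow> L p \<in> S2p"
    using L3 LL unfolding S2p_def by (simp add: norm_eq_1)
  have hL: "\<And>p. p \<in> S2p \<Longrightarrow> h p = iota (L p)"
  proof
    fix p y assume p: "p \<in> S2p"
    show "h p y = iota (L p) y"
    proof (cases "y \<in> S1")
      case False
      then show ?thesis using hE[OF p] unfolding E_S1_def iota_def by auto
    next
      case y: True
      have y3: "y$3 = 0" and yy: "y \<bullet> y = 1" using y unfolding S1_def by (auto simp: norm_eq_1)
      define x where "x = (y \<bullet> u) *\<^sub>R e1 + (y \<bullet> v) *\<^sub>R e2"
      have x3: "x$3 = 0" unfolding x_def e1_def e2_def by simp
      have "x \<bullet> x = (y \<bullet> u)^2 + (y \<bullet> v)^2" unfolding x_def e1_def e2_def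
        by (simp add: inner3 power2_eq_square)
      also have "\<dots> = 1" using P(2)[of y] y3 yy by simp
      finally have xS: "x \<in> S1" using x3 unfolding S1_def by (simp add: norm_eq_1)
      have sxS: "\<sigma> x \<in> S1" using \<sigma> xS by auto
      have s3: "(\<sigma> x)$3 = 0" using sxS unfolding S1_def by auto
      have su: "\<sigma> x \<bullet> u = y \<bullet> u" using pres[OF xS e1S] u_def unfolding x_def e1_def e2_def
        by (simp add: inner3)
      have sv: "\<sigma> x \<bullet> v = y \<bullet> v" using pres[OF xS e2S] v_def unfolding x_def e1_def e2_def
        by (simp add: inner3)
      have "\<sigma> x = y" using P(1)[of "\<sigma> x"] P(1)[of y] su sv s3 y3 by simp
      then have "h p y = gdist p x" using hp[OF p xS] by simp
      also have "\<dots> = arccos (L p \<bullet> y)" unfolding gdist_def Ly[OF y3] x_def e1_def e2_def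
        by (simp add: inner3)
      finally show ?thesis using y unfolding iota_def gdist_def by simp
    qed
  qed
  have LSurj: "L ` S2p = S2p"
  proof
    show "L ` S2p \<subseteq> S2p" using LS by auto
    show "S2p \<subseteq> L ` S2p"
    proof
      fix q assume q: "q \<in> S2p"
      define p :: "real^3" where "p = vector [q \<bullet> u, q \<bullet> v, q$3]"
      have "L p = q" using P(1)[of q] unfolding L_def p_def e3_def by simp
      moreover have "p \<in> S2p" using q P(2)[of q] unfolding S2p_def p_def
        by (simp add: norm_eq_1 inner3 power2_eq_square)
      ultimately show "q \<in> L ` S2p" by blast
    qed
  qed
  have "A = h ` S2p" using hb by (simp add: bij_betw_def)
  also have "\<dots> = iota ` (L ` S2p)" using hL by (auto simp: image_iff)
  also have "\<dots> = iota ` S2p" using LSurj by simp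
  finally show ?thesis .
qed

theorem lemma2p9:
  shows "(\<forall>p\<in>S2p. iota p \<in> E_S1)
    \<and> (\<forall>p\<in>S2p. \<forall>q\<in>S2p. supdist (iota p) (iota q) = gdist p q)
    \<and> (\<forall>A. A \<subseteq> E_S1 \<longrightarrow>
          (\<exists>h. bij_betw h S2p A \<and> (\<forall>p\<in>S2p. \<forall>q\<in>S2p. supdist (h p) (h q) = gdist p q))
          \<longrightarrow> A = iota ` S2p)"
proof (intro conjI ballI allI impI)
  fix A assume "A \<subseteq> E_S1" "\<exists>h. bij_betw h S2p A \<and> (\<forall>p\<in>S2p. \<forall>q\<in>S2p. supdist (h p) (h q) = gdist p q)"
  then show "A = iota ` S2p" using part3 by blast
qed (simp_all add: part1 part2)

end
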